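(* Fix parameters $\mu_e>0$ and $\sigma^2>0$. Consider vanilla federation, in which a player $j$ belonging to a coalition $C$ of players (player $i$ having $n_i>0$ samples) experiences error $$err_j(C)=\frac{\mu_e}{\sum_{i\in C}n_i}+\sigma^2\cdot\frac{\sum_{i\in C,i\neq j}n_i^2+\left(\sum_{i\in C,i\neq j}n_i\right)^2}{\left(\sum_{i\in C}n_i\right)^2}.$$ Then: (1) For any coalition $C$ and any two players $s,l\in C$ with $n_s\le n_l$, we have $err_s(C)\ge err_l(C)$, with strict inequality if $n_s<n_l$. (2) For any $c>0$, any coalition $C$ in which the largest player has at most $c\cdot\frac{\mu_e}{\sigma^2}$ samples satisfies $(2c+1)$-egalitarian fairness, i.e. $\frac{err_i(C)}{err_j(C)}\le 2c+1$ for all $i,j\in C$. (3) This bound is tight up to an additive $\epsilon$: for every $c>0$ and every $\epsilon>0$ there exist parameters $\mu_e,\sigma^2>0$ and sample sizes $n_s\ge 1$, $n_l\le c\cdot\frac{\mu_e}{\sigma^2}$ such that for the two-player coalition $\{s,l\}$, $\frac{err_s(\{s,l\})}{err_l(\{s,l\})}\ge 2c+1-\epsilon$.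
   Context: Model of federated learning (mean estimation): each player $i$ has $n_i$ samples drawn i.i.d. from a distribution with mean $\theta_i$ and variance $\epsilon_i$, where $(\theta_i,\epsilon_i)$ are drawn from a common distribution; $\mu_e=\mathbb{E}[\epsilon_i]$ is the average sampling noise and $\sigma^2=\mathrm{Var}(\theta_i)$ the variance of the true means. A coalition $C$ using vanilla (uniform) federation uses the sample-weighted average of the local mean estimates as a common model; the resulting expected squared error of player $j$ is the formula given in the claim. A coalition $C$ satisfies $\lambda$-egalitarian fairness (for a constant $\lambda\ge1$) if $err_i(C)/err_j(C)\le\lambda$ for all players $i,j$ in $C$. *)

theory Defs
  imports Complex_Main
begin

definition err :: "real \<Rightarrow> real \<Rightarrow> ('a \<Rightarrow> nat) \<Rightarrow> 'a set \<Rightarrow> 'a \<Rightarrow> real" where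
  "err mu sig2 n C j =
     mu / (\<Sum>i\<in>C. real (n i))
     + sig2 * ((\<Sum>i\<in>C - {j}. (real (n i))\<^sup>2) + (\<Sum>i\<in>C - {j}. real (n i))\<^sup>2)
             / (\<Sum>i\<in>C. real (n i))\<^sup>2"

definition egal_fair :: "real \<Rightarrow> real \<Rightarrow> real \<Rightarrow> ('a \<Rightarrow> nat) \<Rightarrow> 'a set \<Rightarrow> bool" where
  "egal_fair lam mu sig2 n C \<longleftrightarrow>
     (\<forall>i\<in>C. \<forall>j\<in>C. err mu sig2 n C i / err mu sig2 n C j \<le> lam)"

end

theory Submission
  imports Defs
begin

lemma err_alt:
  assumes "finite C" "j \<in> C"
  shows "err mu sig2 n C j = mu / (\<Sum>i\<in>C. real (n i))
     + sig2 * ((\<Sum>i\<in>C. (real (n i))\<^sup>2) + (\<Sum>i\<in>C. real (n i))\<^sup>2 - 2 * (\<Sum>i\<in>C. real (n i)) * real (n j))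
       / (\<Sum>i\<in>C. real (n i))\<^sup>2"
proof -
  have a: "(\<Sum>i\<in>C - {j}. (real (n i))\<^sup>2) = (\<Sum>i\<in>C. (real (n i))\<^sup>2) - (real (n j))\<^sup>2"
    using assms by (simp add: sum_diff1)
  have b: "(\<Sum>i\<in>C - {j}. real (n i)) = (\<Sum>i\<in>C. real (n i)) - real (n j)"
    using assms by (simp add: sum_diff1)
  show ?thesis unfolding err_def a b by (simp add: power2_eq_square algebra_simps)
qed

lemma err_nonneg_part:
  assumes "finite C" "j \<in> C"
  shows "(\<Sum>i\<in>C. (real (n i))\<^sup>2) + (\<Sum>i\<in>C. real (n i))\<^sup>2 - 2 * (\<Sum>i\<in>C. real (n i)) * real (n j) \<ge> 0"
proof -
  have a: "(\<Sum>i\<in>C. (real (n i))\<^sup>2) \<ge> (real (n j))\<^sup>2"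
    using assms by (intro member_le_sum) auto
  have "0 \<le> ((\<Sum>i\<in>C. real (n i)) - real (n j))\<^sup>2" by simp
  also have "... = (\<Sum>i\<in>C. real (n i))\<^sup>2 - 2 * (\<Sum>i\<in>C. real (n i)) * real (n j) + (real (n j))\<^sup>2"
    by (simp add: power2_eq_square algebra_simps)
  finally have "(\<Sum>i\<in>C. real (n i))\<^sup>2 - 2 * (\<Sum>i\<in>C. real (n i)) * real (n j) + (real (n j))\<^sup>2 \<ge> 0" .
  with a show ?thesis by linarith
qed

theorem theorem4p1:
  fixes mu sig2 :: real and n :: "'a \<Rightarrow> nat"
  assumes mu_pos: "mu > 0" and sig_pos: "sig2 > 0"
  shows
    "(\<forall>(C::'a set) s l. finite C \<and> (\<forall>i\<in>C. n i > 0) \<and> s \<in> C \<and> l \<in> C \<and> n s \<le> n l \<longrightarrow>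
        err mu sig2 n C s \<ge> err mu sig2 n C l \<and>
        (n s < n l \<longrightarrow> err mu sig2 n C s > err mu sig2 n C l))
   \<and> (\<forall>(c::real) (C::'a set). c > 0 \<and> finite C \<and> C \<noteq> {} \<and> (\<forall>i\<in>C. n i > 0)
        \<and> (\<forall>i\<in>C. real (n i) \<le> c * mu / sig2) \<longrightarrow> egal_fair (2 * c + 1) mu sig2 n C)
   \<and> (\<forall>(c::real) (eps::real). c > 0 \<and> eps > 0 \<longrightarrow>
        (\<exists>mu' sig2' (n'::nat \<Rightarrow> nat) (s::nat) (l::nat).
           mu' > 0 \<and> sig2' > 0 \<and> s \<noteq> l \<and> n' s \<ge> 1 \<and> n' l \<ge> 1 \<and>
           real (n' l) \<le> c * mu' / sig2' \<and> real (n' s) \<le> c * mu' / sig2' \<and>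
           err mu' sig2' n' {s, l} s / err mu' sig2' n' {s, l} l \<ge> 2 * c + 1 - eps))"
proof (intro conjI allI impI)
  fix C :: "'a set" and s l
  assume H: "finite C \<and> (\<forall>i\<in>C. n i > 0) \<and> s \<in> C \<and> l \<in> C \<and> n s \<le> n l"
  define N where "N = (\<Sum>i\<in>C. real (n i))"
  define S where "S = (\<Sum>i\<in>C. (real (n i))\<^sup>2)"
  have Npos: "N > 0" unfolding N_def using H
    by (intro sum_pos2[of C s]) auto
  have es: "err mu sig2 n C s = mu / N + sig2 * (S + N\<^sup>2 - 2 * N * real (n s)) / N\<^sup>2"
    using err_alt[of C s] H unfolding N_def S_def by auto
  have el: "err mu sig2 n C l = mu / N + sig2 * (S + N\<^sup>2 - 2 * N * real (n l)) / N\<^sup>2"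
    using err_alt[of C l] H unfolding N_def S_def by auto
  have key: "sig2 * (S + N\<^sup>2 - 2 * N * real (n l)) / N\<^sup>2 \<le> sig2 * (S + N\<^sup>2 - 2 * N * real (n s)) / N\<^sup>2"
    using H Npos sig_pos by (intro divide_right_mono mult_left_mono) auto
  show "err mu sig2 n C s \<ge> err mu sig2 n C l" using es el key by simp
  { assume "n s < n l"
    then have "sig2 * (S + N\<^sup>2 - 2 * N * real (n l)) / N\<^sup>2 < sig2 * (S + N\<^sup>2 - 2 * N * real (n s)) / N\<^sup>2"
      using Npos sig_pos by (intro divide_strict_right_mono mult_strict_left_mono) auto
    then show "err mu sig2 n C s > err mu sig2 n C l" using es el by simp }
next
  fix c :: real and C :: "'a set"
  assume H: "c > 0 \<and> finite C \<and> C \<noteq> {} \<and> (\<forall>i\<in>C. n i > 0) \<and> (\<forall>i\<in>C. real (n i) \<le> c * mu / sig2)"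
  define N where "N = (\<Sum>i\<in>C. real (n i))"
  define S where "S = (\<Sum>i\<in>C. (real (n i))\<^sup>2)"
  show "egal_fair (2 * c + 1) mu sig2 n C"
    unfolding egal_fair_def
  proof (intro ballI)
    fix i j assume ij: "i \<in> C" "j \<in> C"
    have Npos: "N > 0" unfolding N_def using H ij
      by (intro sum_pos2[of C i]) auto
    have ei: "err mu sig2 n C i = mu / N + sig2 * (S + N\<^sup>2 - 2 * N * real (n i)) / N\<^sup>2"
      using err_alt[of C i] H ij unfolding N_def S_def by auto
    have ej: "err mu sig2 n C j = mu / N + sig2 * (S + N\<^sup>2 - 2 * N * real (n j)) / N\<^sup>2"
      using err_alt[of C j] H ij unfolding N_def S_def by auto
    have nn: "S + N\<^sup>2 - 2 * N * real (n j) \<ge> 0"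
      using err_nonneg_part[of C j n] H ij unfolding N_def S_def by auto
    have t: "sig2 * (S + N\<^sup>2 - 2 * N * real (n j)) / N\<^sup>2 \<ge> 0"
      using nn sig_pos by simp
    have ejge: "err mu sig2 n C j \<ge> mu / N" using ej t by simp
    have ejpos: "err mu sig2 n C j > 0" using ejge mu_pos Npos
      by (smt (verit) divide_pos_pos)
    have diff: "err mu sig2 n C i - err mu sig2 n C j = 2 * sig2 * (real (n j) - real (n i)) / N"
      unfolding ei ej using Npos by (simp add: field_simps power2_eq_square)
    have "sig2 * real (n j) \<le> c * mu" using H ij sig_pos
      by (simp add: pos_le_divide_eq mult.commute)
    moreover have "0 \<le> sig2 * real (n i)" using sig_pos by simp
    ultimately have "2 * sig2 * (real (n j) - real (n i)) \<le> 2 * c * mu"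
      by (simp add: algebra_simps)
    then have "2 * sig2 * (real (n j) - real (n i)) / N \<le> 2 * c * (mu / N)" using Npos
      by (simp add: divide_right_mono)
    also have "... \<le> 2 * c * err mu sig2 n C j" using mult_left_mono[OF ejge, of "2*c"] H by simp
    finally have "err mu sig2 n C i \<le> (2 * c + 1) * err mu sig2 n C j"
      using diff by (simp add: algebra_simps)
    then show "err mu sig2 n C i / err mu sig2 n C j \<le> 2 * c + 1"
      using ejpos by (simp add: divide_le_eq)
  qed
next
  fix c eps :: real
  assume H: "c > 0 \<and> eps > 0"
  define m :: nat where "m = nat (ceiling (1 + 4 * c / eps + 2 * c))"
  have m1: "real m \<ge> 1 + 4 * c / eps + 2 * c" unfolding m_def
    by (rule real_nat_ceiling_ge)
  have H4: "4 * c / eps \<ge> 0" using H by simp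
  have mge: "real m \<ge> 1" "real m \<ge> 2 * c" "real m \<ge> 4 * c / eps" using m1 H H4 by linarith+
  define n' :: "nat \<Rightarrow> nat" where "n' = (\<lambda>i. if i = 0 then 1 else m)"
  define x where "x = real m"
  have x1: "x \<ge> 1" using mge x_def by simp
  have d0: "{0::nat,1} - {0} = {1}" and d1: "{0::nat,1} - {1} = {0}" by auto
  have es: "err (x / c) 1 n' {0, 1} 0 = (x / c) / (x + 1) + (2 * x\<^sup>2) / (x + 1)\<^sup>2"
    unfolding err_def n'_def x_def d0 d1 by (simp add: power2_eq_square algebra_simps)
  have el: "err (x / c) 1 n' {0, 1} 1 = (x / c) / (x + 1) + 2 / (x + 1)\<^sup>2"
    unfolding err_def n'_def x_def d0 d1 by (simp add: power2_eq_square algebra_simps)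
  have xp: "(x + 1)\<^sup>2 > 0" using x1 by simp
  have nz: "x + 1 \<noteq> 0" "c \<noteq> 0" using x1 H by auto
  have ab: "x * (x + 1) / c / (x + 1)\<^sup>2 = (x / c) / (x + 1)"
    using nz by (simp add: power2_eq_square)
  have es2: "(x / c) / (x + 1) + (2 * x\<^sup>2) / (x + 1)\<^sup>2 = (x * (x + 1) / c + 2 * x\<^sup>2) / (x + 1)\<^sup>2"
    using ab by (simp add: add_divide_distrib)
  have el2: "(x / c) / (x + 1) + 2 / (x + 1)\<^sup>2 = (x * (x + 1) / c + 2) / (x + 1)\<^sup>2"
    using ab by (simp add: add_divide_distrib)
  have ratio: "err (x / c) 1 n' {0, 1} 0 / err (x / c) 1 n' {0, 1} 1
      = (x * (x + 1) / c + 2 * x\<^sup>2) / (x * (x + 1) / c + 2)"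
    unfolding es el es2 el2 using xp by simp
  have em: "eps * x / c \<ge> 4" using mge H x_def by (simp add: field_simps)
  have "eps * (x * (x + 1) / c) = (eps * x / c) * (x + 1)" by (simp add: field_simps)
  also have "... \<ge> 4 * (x + 1)" using em x1 by (intro mult_right_mono) auto
  finally have A: "eps * (x * (x + 1) / c) \<ge> 4 * (x + 1)" .
  have D0: "x * (x + 1) / c \<ge> 0" using x1 H by (intro divide_nonneg_pos mult_nonneg_nonneg) auto
  have Dpos: "x * (x + 1) / c + 2 > 0" using D0 by linarith
  have "(2 * c + 1 - eps) * (x * (x + 1) / c + 2) \<le> x * (x + 1) / c + 2 * x\<^sup>2"
  proof -
    define A where "A = x * (x + 1) / c"
    have e1: "(2 * c + 1) * A = 2 * (x * x) + 2 * x + A" unfolding A_def using H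
      by (simp add: field_simps)
    have e2: "(2 * c + 1 - eps) * (A + 2) = (2 * c + 1) * A + 2 * (2 * c + 1) - eps * A - 2 * eps"
      by (simp add: algebra_simps)
    have e3: "eps * A \<ge> 4 * (x + 1)" using A unfolding A_def .
    have "x \<ge> 2 * c" using mge x_def by simp
    then have "(2 * c + 1 - eps) * (A + 2) \<le> A + 2 * (x * x)"
      unfolding e2 e1 using e3 H by (elim conjE) (smt (verit))
    then show ?thesis unfolding A_def by (simp add: power2_eq_square)
  qed
  then have R: "err (x / c) 1 n' {0, 1} 0 / err (x / c) 1 n' {0, 1} 1 \<ge> 2 * c + 1 - eps"
    unfolding ratio using Dpos by (simp add: le_divide_eq)
  show "\<exists>mu' sig2' (n'::nat \<Rightarrow> nat) (s::nat) (l::nat).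
           mu' > 0 \<and> sig2' > 0 \<and> s \<noteq> l \<and> n' s \<ge> 1 \<and> n' l \<ge> 1 \<and>
           real (n' l) \<le> c * mu' / sig2' \<and> real (n' s) \<le> c * mu' / sig2' \<and>
           err mu' sig2' n' {s, l} s / err mu' sig2' n' {s, l} l \<ge> 2 * c + 1 - eps"
    apply (rule exI[of _ "x / c"], rule exI[of _ 1], rule exI[of _ n'], rule exI[of _ 0], rule exI[of _ 1])
    using R x1 H x_def unfolding n'_def by auto
qed

end
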